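(* Let $f_c>0$, $B>0$, $t_{\max}>0$, let $K\ge 3$ be an odd integer, and for $k\in\{1,\dots,K\}$ let $f_k = f_c + \frac{B}{K}\left(k-1-\frac{K-1}{2}\right)$ and $\zeta_k=f_k/f_c$. Let $N\ge1$ and $m\ge1$ be integers, let $\psi_{c,l}\ge 0$, and define $\gamma_{n,m}^{(l)} = ((m-1)N+n-1)\psi_{c,l}$ for $n=1,\dots,N$, and $\vartheta_{\max}=2f_c t_{\max}$. Consider the problem $$\min_{x_{1,m}^{(l)},\dots,x_{N,m}^{(l)}\in\mathbb{R},\ \vartheta_m^{(l)}\in\mathbb{R}}\ \frac{1}{K}\sum_{k=1}^{K}\sum_{n=1}^{N}\left(x_{n,m}^{(l)}-\zeta_k\vartheta_m^{(l)}+\zeta_k\gamma_{n,m}^{(l)}\right)^2 \quad\text{subject to}\quad 0\le \vartheta_m^{(l)}\le\vartheta_{\max}.$$ Its optimal solution is given by $$x_{n,m}^{(l)\star}=\begin{cases}\frac{N-2n+1}{2}\psi_{c,l}, & \text{if } 0\le\psi_{c,l}\le \frac{4f_ct_{\max}}{(2m-1)N-1},\\[2pt] \vartheta_{\max}-\gamma_{n,m}^{(l)}, & \text{otherwise},\end{cases}\qquad n=1,\dots,N,$$ and $\vartheta_m^{(l)\star}=2f_c t_m^{(l)\star}$, where $$t_m^{(l)\star}=\begin{cases}\frac{(2m-1)N-1}{4f_c}\psi_{c,l}, & \text{if } 0\le\psi_{c,l}\le \frac{4f_ct_{\max}}{(2m-1)N-1},\\[2pt] t_{\max}, & \text{otherwise},\end{cases}$$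 with the convention that $\frac{4f_ct_{\max}}{(2m-1)N-1}=+\infty$ when $(2m-1)N-1=0$.
   Context: This is the phase-domain formulation of joint phase-shifter/true-time-delay precoding for one RF chain $l$ and one TTD index $m$: $x_{n,m}^{(l)}$ (in units of $\pi$) are the phase-shifter phases of the $N$ antennas connected to the $m$th TTD, $\vartheta_m^{(l)}=2f_ct_m^{(l)}$ with $t_m^{(l)}\in[0,t_{\max}]$ the TTD time delay, and $-\zeta_k\gamma_{n,m}^{(l)}$ is the phase (in units of $\pi$) of the optimal fully-digital precoder at subcarrier $k$. The paper assumes throughout that $\psi_{c,l}\ge 0$. *)

theory Defs
  imports Complex_Main
begin

definition subcarrier_freq :: "real \<Rightarrow> real \<Rightarrow> nat \<Rightarrow> nat \<Rightarrow> real" where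
  "subcarrier_freq fc B K k = fc + B / real K * (real k - 1 - (real K - 1) / 2)"

definition zeta :: "real \<Rightarrow> real \<Rightarrow> nat \<Rightarrow> nat \<Rightarrow> real" where
  "zeta fc B K k = subcarrier_freq fc B K k / fc"

definition gamma :: "nat \<Rightarrow> nat \<Rightarrow> real \<Rightarrow> nat \<Rightarrow> real" where
  "gamma N m psi n = (real ((m - 1) * N + n) - 1) * psi"

definition objective ::
  "real \<Rightarrow> real \<Rightarrow> nat \<Rightarrow> nat \<Rightarrow> nat \<Rightarrow> real \<Rightarrow> (nat \<Rightarrow> real) \<Rightarrow> real \<Rightarrow> real" where
  "objective fc B K N m psi x theta =
     1 / real K * (\<Sum>k = 1..K. \<Sum>n = 1..N.
        (x n - zeta fc B K k * theta + zeta fc B K k * gamma N m psi n)\<^sup>2)"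

definition small_psi :: "real \<Rightarrow> real \<Rightarrow> nat \<Rightarrow> nat \<Rightarrow> real \<Rightarrow> bool" where
  "small_psi fc tmax N m psi \<longleftrightarrow>
     0 \<le> psi \<and> (real ((2 * m - 1) * N) - 1 = 0 \<or>
                  psi \<le> 4 * fc * tmax / (real ((2 * m - 1) * N) - 1))"

definition x_opt :: "real \<Rightarrow> real \<Rightarrow> nat \<Rightarrow> nat \<Rightarrow> real \<Rightarrow> nat \<Rightarrow> real" where
  "x_opt fc tmax N m psi n =
     (if small_psi fc tmax N m psi then (real N - 2 * real n + 1) / 2 * psi
      else 2 * fc * tmax - gamma N m psi n)"

definition t_opt :: "real \<Rightarrow> real \<Rightarrow> nat \<Rightarrow> nat \<Rightarrow> real \<Rightarrow> real" where
  "t_opt fc tmax N m psi =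
     (if small_psi fc tmax N m psi then (real ((2 * m - 1) * N) - 1) / (4 * fc) * psi
      else tmax)"

end

theory Submission
  imports Defs
begin

lemma gauss_real: "(\<Sum>k = 1..(K::nat). real k) = real K * (real K + 1) / 2"
proof (induction K)
  case 0 then show ?case by simp
next
  case (Suc K)
  have "(\<Sum>k = 1..Suc K. real k) = (\<Sum>k = 1..K. real k) + real (Suc K)"
    by (rule sum.cl_ivl_Suc[THEN trans]) simp
  then show ?case using Suc by (simp add: field_simps)
qed

lemma centered_sum: "(\<Sum>k = 1..(K::nat). (real k - (real K + 1) / 2)) = 0"
proof -
  have "(\<Sum>k = 1..K. (real k - (real K + 1) / 2)) = (\<Sum>k = 1..K. real k) - real K * ((real K + 1) / 2)"
    by (simp add: sum_subtractf)
  also have "\<dots> = 0" by (subst gauss_real) (simp add: field_simps)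
  finally show ?thesis .
qed

lemma zeta_sum:
  assumes "fc > 0" "K > 0"
  shows "(\<Sum>k = 1..K. zeta fc B K k - 1) = 0"
proof -
  have e: "zeta fc B K k - 1 = B / (real K * fc) * (real k - (real K + 1) / 2)" for k
    using assms by (simp add: zeta_def subcarrier_freq_def field_simps)
  have "(\<Sum>k = 1..K. (real k - (real K + 1) / 2)) = 0"
    by (rule centered_sum)
  moreover have "(\<Sum>k = 1..K. zeta fc B K k - 1) = (\<Sum>k = 1..K. B / (real K * fc) * (real k - (real K + 1) / 2))"
    by (rule sum.cong) (simp_all add: e)
  moreover have "\<dots> = B / (real K * fc) * (\<Sum>k = 1..K. (real k - (real K + 1) / 2))"
    by (rule sum_distrib_left[symmetric])
  ultimately show ?thesis by simp
qed

lemma zeta_var_pos: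
  assumes "fc > 0" "K \<ge> 3" "B > 0"
  shows "(\<Sum>k = 1..K. (zeta fc B K k - 1)\<^sup>2) > 0"
proof -
  have e: "zeta fc B K 1 - 1 = B / (real K * fc) * (- (real K - 1) / 2)"
    using assms by (simp add: zeta_def subcarrier_freq_def field_simps)
  have "zeta fc B K 1 - 1 \<noteq> 0" unfolding e using assms by auto
  hence p: "(zeta fc B K 1 - 1)\<^sup>2 > 0" by simp
  have "(zeta fc B K 1 - 1)\<^sup>2 \<le> (\<Sum>k = 1..K. (zeta fc B K k - 1)\<^sup>2)"
    by (rule member_le_sum) (use assms in auto)
  with p show ?thesis by linarith
qed

lemma inner_sum:
  assumes "fc > 0" "K > 0"
  shows "(\<Sum>k = 1..K. (y + zeta fc B K k * d)\<^sup>2)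
     = real K * (y + d)\<^sup>2 + (\<Sum>k = 1..K. (zeta fc B K k - 1)\<^sup>2) * d\<^sup>2"
proof -
  have "(\<Sum>k = 1..K. (y + zeta fc B K k * d)\<^sup>2)
      = (\<Sum>k = 1..K. (y + d)\<^sup>2 + 2 * (y + d) * d * (zeta fc B K k - 1)
            + (zeta fc B K k - 1)\<^sup>2 * d\<^sup>2)"
    by (rule sum.cong) (auto simp: power2_eq_square algebra_simps)
  also have "\<dots> = real K * (y + d)\<^sup>2 + 2 * (y + d) * d * (\<Sum>k = 1..K. zeta fc B K k - 1)
            + (\<Sum>k = 1..K. (zeta fc B K k - 1)\<^sup>2) * d\<^sup>2"
    by (simp add: sum.distrib sum_distrib_left sum_distrib_right)
  finally show ?thesis using zeta_sum[OF assms] by simp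
qed

theorem theorem1:
  fixes fc B tmax psi :: real and K N m :: nat
  assumes "fc > 0" "B > 0" "tmax > 0"
    and "K \<ge> 3" "odd K"
    and "N \<ge> 1" "m \<ge> 1"
    and "psi \<ge> 0"
  shows "0 \<le> 2 * fc * t_opt fc tmax N m psi
       \<and> 2 * fc * t_opt fc tmax N m psi \<le> 2 * fc * tmax
       \<and> (\<forall>x theta. 0 \<le> theta \<and> theta \<le> 2 * fc * tmax \<longrightarrow>
            objective fc B K N m psi (x_opt fc tmax N m psi) (2 * fc * t_opt fc tmax N m psi)
              \<le> objective fc B K N m psi x theta)
       \<and> (\<forall>x theta. 0 \<le> theta \<and> theta \<le> 2 * fc * tmax \<and>
            objective fc B K N m psi x theta
              = objective fc B K N m psi (x_opt fc tmax N m psi) (2 * fc * t_opt fc tmax N m psi)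
            \<longrightarrow> theta = 2 * fc * t_opt fc tmax N m psi
                \<and> (\<forall>n \<in> {1..N}. x n = x_opt fc tmax N m psi n))"
proof -
  have K0: "K > 0" using assms by simp
  define V where "V = (\<Sum>k = 1..K. (zeta fc B K k - 1)\<^sup>2)"
  have Vpos: "V > 0" unfolding V_def using zeta_var_pos assms by auto
  define a where "a = real ((2 * m - 1) * N) - 1"
  have a_eq: "a = 2 * (real m - 1) * real N + real N - 1"
    unfolding a_def using assms by (simp add: of_nat_diff algebra_simps)
  have a0: "a \<ge> 0"
  proof -
    have "(real m - 1) * real N \<ge> 0" using assms by simp
    moreover have "real N \<ge> 1" using assms by simp
    ultimately show ?thesis using a_eq by linarith
  qed
  define mu where "mu = a * psi / 2"
  have mu0: "mu \<ge> 0" unfolding mu_def using a0 assms by simp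
  define g where "g n = gamma N m psi n" for n
  have g_eq: "g n = ((real m - 1) * real N + real n - 1) * psi" if "n \<ge> 1" for n
  proof -
    have "real ((m - 1) * N + n) = real (m - 1) * real N + real n"
      by (simp only: of_nat_add of_nat_mult)
    also have "real (m - 1) = real m - 1" using assms by (simp add: of_nat_diff)
    finally show ?thesis unfolding g_def gamma_def by simp
  qed
  have gsum: "(\<Sum>n = 1..N. g n - mu) = 0"
  proof -
    have "(\<Sum>n = 1..N. g n - mu) = (\<Sum>n = 1..N. (real n - (real N + 1) / 2) * psi)"
      by (rule sum.cong) (auto simp: g_eq mu_def a_eq field_simps)
    also have "\<dots> = (\<Sum>n = 1..N. (real n - (real N + 1) / 2)) * psi"
      by (simp add: sum_distrib_right)
    also have "(\<Sum>n = 1..N. (real n - (real N + 1) / 2)) = 0"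
      by (rule centered_sum)
    finally show ?thesis by simp
  qed
  define C0 where "C0 = V / real K * (\<Sum>n = 1..N. (g n - mu)\<^sup>2)"
  have obj: "objective fc B K N m psi x th
      = (\<Sum>n = 1..N. (x n - th + g n)\<^sup>2) + V / real K * real N * (th - mu)\<^sup>2 + C0"
    for x th
  proof -
    have "objective fc B K N m psi x th
       = 1 / real K * (\<Sum>n = 1..N. \<Sum>k = 1..K. (x n + zeta fc B K k * (g n - th))\<^sup>2)"
      unfolding objective_def g_def
      by (subst sum.swap) (simp add: algebra_simps)
    also have "\<dots> = 1 / real K * (\<Sum>n = 1..N. real K * (x n - th + g n)\<^sup>2 + V * (g n - th)\<^sup>2)"
    proof -
      have "(\<Sum>k = 1..K. (x n + zeta fc B K k * (g n - th))\<^sup>2)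
          = real K * (x n - th + g n)\<^sup>2 + V * (g n - th)\<^sup>2" for n
        using inner_sum[OF assms(1) K0, of "x n" B "g n - th"] unfolding V_def
        by (simp add: algebra_simps)
      then show ?thesis by simp
    qed
    also have "\<dots> = (\<Sum>n = 1..N. (x n - th + g n)\<^sup>2) + V / real K * (\<Sum>n = 1..N. (g n - th)\<^sup>2)"
      using K0 by (simp add: sum.distrib sum_distrib_left field_simps)
    also have "(\<Sum>n = 1..N. (g n - th)\<^sup>2)
       = (\<Sum>n = 1..N. (g n - mu)\<^sup>2 + 2 * (mu - th) * (g n - mu) + (mu - th)\<^sup>2)"
      by (rule sum.cong) (auto simp: power2_eq_square algebra_simps)
    also have "\<dots> = (\<Sum>n = 1..N. (g n - mu)\<^sup>2) + 2 * (mu - th) * (\<Sum>n = 1..N. g n - mu)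
        + real N * (mu - th)\<^sup>2"
      by (simp add: sum.distrib sum_distrib_left)
    finally show ?thesis using gsum unfolding C0_def
      by (simp add: algebra_simps power2_commute)
  qed
  define ts where "ts = 2 * fc * t_opt fc tmax N m psi"
  have ts_cases: "(ts = mu \<and> mu \<le> 2 * fc * tmax) \<or> (ts = 2 * fc * tmax \<and> mu > 2 * fc * tmax)"
  proof (cases "small_psi fc tmax N m psi")
    case True
    then have sp: "a = 0 \<or> psi \<le> 4 * fc * tmax / a"
      unfolding small_psi_def a_def[symmetric] by simp
    have "a * psi \<le> 4 * fc * tmax"
    proof (cases "a = 0")
      case True then show ?thesis using assms by simp
    next
      case False
      then have "a > 0" using a0 by simp
      then show ?thesis using sp False by (simp add: pos_le_divide_eq mult.commute)
    qed
    then have "mu \<le> 2 * fc * tmax" unfolding mu_def by simp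
    moreover have "ts = mu" using True assms unfolding ts_def t_opt_def mu_def a_def
      by (simp add: field_simps)
    ultimately show ?thesis by simp
  next
    case False
    then have ap: "a \<noteq> 0" and lt: "psi > 4 * fc * tmax / a"
      using assms unfolding small_psi_def a_def[symmetric] by auto
    have "a > 0" using ap a0 by simp
    then have "mu > 2 * fc * tmax" using lt unfolding mu_def by (simp add: field_simps)
    moreover have "ts = 2 * fc * tmax" using False unfolding ts_def t_opt_def by simp
    ultimately show ?thesis by simp
  qed
  have ts_int: "0 \<le> ts \<and> ts \<le> 2 * fc * tmax" using ts_cases mu0 assms by auto
  have xo: "x_opt fc tmax N m psi n = ts - g n" if "n \<in> {1..N}" for n
  proof (cases "small_psi fc tmax N m psi")
    case True
    then have "ts = mu" using assms unfolding ts_def t_opt_def mu_def a_def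
      by (simp add: field_simps)
    then show ?thesis using True that unfolding x_opt_def
      by (auto simp: g_eq mu_def a_eq field_simps)
  next
    case False
    then show ?thesis unfolding x_opt_def ts_def t_opt_def g_def by simp
  qed
  have sq0: "(\<Sum>n = 1..N. (x_opt fc tmax N m psi n - ts + g n)\<^sup>2) = 0"
    by (rule sum.neutral) (simp add: xo)
  have objopt: "objective fc B K N m psi (x_opt fc tmax N m psi) ts
      = V / real K * real N * (ts - mu)\<^sup>2 + C0"
    using obj sq0 by simp
  have cpos: "V / real K * real N > 0" using Vpos K0 assms by simp
  have dist: "(ts - mu)\<^sup>2 \<le> (th - mu)\<^sup>2" if "0 \<le> th" "th \<le> 2 * fc * tmax" for th
  proof -
    { assume "ts = mu" then have ?thesis by simp }
    moreover
    { assume h: "ts = 2 * fc * tmax" "mu > 2 * fc * tmax"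
      then have "(mu - ts)\<^sup>2 \<le> (mu - th)\<^sup>2" using that by (intro power_mono) auto
      then have ?thesis by (simp add: power2_commute) }
    ultimately show ?thesis using ts_cases by blast
  qed
  have dist_eq: "th = ts" if "0 \<le> th" "th \<le> 2 * fc * tmax" "(ts - mu)\<^sup>2 = (th - mu)\<^sup>2" for th
  proof -
    have "\<bar>ts - mu\<bar> = \<bar>th - mu\<bar>" using that(3) by (metis real_sqrt_abs)
    then show ?thesis using ts_cases that by auto
  qed
  have nonneg: "(\<Sum>n = 1..N. (x n - th + g n)\<^sup>2) \<ge> 0" for x th
    by (rule sum_nonneg) simp
  show ?thesis
  proof (intro conjI allI impI)
    show "0 \<le> 2 * fc * t_opt fc tmax N m psi" using ts_int ts_def by simp
    show "2 * fc * t_opt fc tmax N m psi \<le> 2 * fc * tmax" using ts_int ts_def by simp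
  next
    fix x th assume h: "0 \<le> th \<and> th \<le> 2 * fc * tmax"
    have "V / real K * real N * (ts - mu)\<^sup>2 \<le> V / real K * real N * (th - mu)\<^sup>2"
      using dist[of th] h cpos by (intro mult_left_mono) auto
    then show "objective fc B K N m psi (x_opt fc tmax N m psi) (2 * fc * t_opt fc tmax N m psi)
              \<le> objective fc B K N m psi x th"
      unfolding ts_def[symmetric] objopt obj[of x th] using nonneg[of x th] by linarith
  next
    fix x th assume h: "0 \<le> th \<and> th \<le> 2 * fc * tmax \<and>
            objective fc B K N m psi x th
              = objective fc B K N m psi (x_opt fc tmax N m psi) (2 * fc * t_opt fc tmax N m psi)"
    have E: "(\<Sum>n = 1..N. (x n - th + g n)\<^sup>2) + V / real K * real N * (th - mu)\<^sup>2
        = V / real K * real N * (ts - mu)\<^sup>2"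
      using h unfolding ts_def[symmetric] objopt obj[of x th] by linarith
    have D: "V / real K * real N * (ts - mu)\<^sup>2 \<le> V / real K * real N * (th - mu)\<^sup>2"
      using dist[of th] h cpos by (intro mult_left_mono) auto
    have S0: "(\<Sum>n = 1..N. (x n - th + g n)\<^sup>2) = 0" using E D nonneg[of x th] by linarith
    have "(ts - mu)\<^sup>2 = (th - mu)\<^sup>2" using E S0 cpos K0 Vpos assms(6) by auto
    then have tht: "th = ts" using dist_eq h by blast
    then show "th = 2 * fc * t_opt fc tmax N m psi" using ts_def by simp
    show "\<forall>n\<in>{1..N}. x n = x_opt fc tmax N m psi n"
    proof
      fix n assume n: "n \<in> {1..N}"
      have "(x n - th + g n)\<^sup>2 = 0"
        using S0 sum_nonneg_eq_0_iff[of "{1..N}" "\<lambda>n. (x n - th + g n)\<^sup>2"] n by simp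
      then show "x n = x_opt fc tmax N m psi n" using xo[OF n] tht by simp
    qed
  qed
qed

end
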